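(* Consider the ring network, traffic model and shortest-path routing described in the context, and fix a wavelength $\lambda\in\{1,\ldots,\Lambda\}$. For every $n\in\{0,\ldots,N-1\}$, \[ \mathbb{P}\big(\overset{\curvearrowright}{n}_{\lambda}\big)=\mathbb{P}\big(\overset{\curvearrowright}{(\lceil n\rceil_{\lambda})}_{\lambda}\big)-\mathbb{P}\big(S\in\{n,\ldots,\lceil n\rceil_{\lambda}-1\},\ \mathcal{G}_{\lambda}\neq S\big), \] where $\lceil n\rceil_\lambda:=\left\lceil \frac{n-\lambda}{\Lambda}\right\rceil\Lambda+\lambda$ (node and segment indices modulo $N$; the set $\{n,\ldots,\lceil n\rceil_\lambda-1\}$ is empty if $n=\lceil n\rceil_\lambda$). In particular, the utilization of any segment on $\lambda$ is at most that of the segment $u_{\lceil n\rceil_\lambda}$ leading into the next node homed on $\lambda$.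
   Context: Network: a bidirectional ring with $N$ nodes labeled $1,\ldots,N$ in clockwise order; node labels are taken modulo $N$, so node $N$ is also called node $0$. There are $\Lambda$ wavelength channels $1,\ldots,\Lambda$ in each ring direction, and $\eta:=N/\Lambda$ is a positive integer. Node $n$ receives (is homed) on wavelength $\lambda$ iff $n\in\mathcal{M}_\lambda:=\{\lambda+k\Lambda: k=0,\ldots,\eta-1\}$. For $1\le n\le N$, $u_n$ denotes the clockwise ring segment from node $n-1$ to node $n$. Node $N$ is the hotspot. Traffic: each packet has a sender $S$ and a destination (fanout) set $\mathcal{F}\subset\{1,\ldots,N\}\setminus\{S\}$, generated as follows, with $\alpha,\beta,\gamma\ge 0$, $\alpha+\beta+\gamma=1$. With probability $\alpha$ (uniform traffic): $S$ is uniform on $\{1,\ldots,N\}$, a fanout $l\in\{1,\ldots,N-1\}$ is drawn from a distribution $(\mu_l)$, and $\mathcal{F}$ is uniform among $l$-subsets of $\{1,\ldots,N\}\setminus\{S\}$. With probability $\beta$ (hotspot destination traffic): $S$ is uniform on $\{1,\ldots,N-1\}$, $l$ is drawn from $(\nu_l)$, and $\mathcal{F}=\mathcal{F}'\cup\{N\}$ with $\mathcal{F}'$ uniform among $(l-1)$-subsets of $\{1,\ldots,N-1\}\setminus\{S\}$. With probability $\gamma$ (hotspot source traffic): $S=N$, $l$ is drawn from $(\kappa_l)$, and $\mathcal{F}$ is uniform among $l$-subsets of $\{1,\ldots,N-1\}$. $\mathbb{P}$ denotes the probability measure of this model. Shortest-path routing on wavelength $\lambda$: let $\mathcal{F}_\lambda:=\mathcal{F}\cap\mathcal{M}_\lambda$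 and $\mathcal{A}_\lambda:=\mathcal{F}_\lambda\cup\{S\}$. The "gaps" are the clockwise arcs between cyclically consecutive nodes of $\mathcal{A}_\lambda$ (if $\mathcal{A}_\lambda=\{X_1<\dots<X_{\ell+1}\}$, their lengths are $X_1+N-X_{\ell+1}$ and $X_{i}-X_{i-1}$). A largest gap is chosen, uniformly at random among ties ($CLG_\lambda$), and $\mathcal{G}_\lambda\in\{0,\ldots,N-1\}$ denotes the node at which $CLG_\lambda$ starts (clockwise). The packet is sent on $\lambda$ from $S$ clockwise up to $\mathcal{G}_\lambda$ and counterclockwise up to the node ending $CLG_\lambda$, so exactly the segments outside $CLG_\lambda$ are traversed. The event $\overset{\curvearrowright}{n}_{\lambda}$ means that segment $u_n$ is traversed clockwise on wavelength $\lambda$, i.e., $u_n$ lies on the clockwise arc from $S$ to $\mathcal{G}_\lambda$. *)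

theory Defs
  imports "HOL-Probability.Probability"
begin

text \<open>Nodes are labelled 1..N for senders/destinations; residues mod N are used for
ring positions (node N = node 0). L is the number of wavelengths, lam a wavelength.\<close>

definition fanout_sets :: "nat set \<Rightarrow> nat \<Rightarrow> nat set set" where
  "fanout_sets U l = {A. A \<subseteq> U \<and> card A = l}"

text \<open>Packet (sender, fanout set) distribution: mixture of uniform, hotspot-destination
and hotspot-source traffic with weights alpha, beta, gamma.\<close>
definition packet_pmf ::
  "nat \<Rightarrow> real \<Rightarrow> real \<Rightarrow> real \<Rightarrow> nat pmf \<Rightarrow> nat pmf \<Rightarrow> nat pmf \<Rightarrow> (nat \<times> nat set) pmf" where
  "packet_pmf N \<alpha> \<beta> \<gamma> \<mu> \<nu> \<kappa> =
     bind_pmf (embed_pmf (\<lambda>i::nat. if i = 0 then \<alpha> else if i = 1 then \<beta> else if i = 2 then \<gamma> else 0))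
       (\<lambda>t. if t = 0 then
              bind_pmf (pmf_of_set {1..N}) (\<lambda>S. bind_pmf \<mu> (\<lambda>l.
                map_pmf (\<lambda>F. (S, F)) (pmf_of_set (fanout_sets ({1..N} - {S}) l))))
            else if t = 1 then
              bind_pmf (pmf_of_set {1..N-1}) (\<lambda>S. bind_pmf \<nu> (\<lambda>l.
                map_pmf (\<lambda>F'. (S, insert N F')) (pmf_of_set (fanout_sets ({1..N-1} - {S}) (l - 1)))))
            else
              bind_pmf \<kappa> (\<lambda>l. map_pmf (\<lambda>F. (N, F)) (pmf_of_set (fanout_sets {1..N-1} l))))"

definition homed :: "nat \<Rightarrow> nat \<Rightarrow> nat \<Rightarrow> nat set" where
  "homed N L lam = {lam + k * L | k. k < N div L}"

definition A_res :: "nat \<Rightarrow> nat \<Rightarrow> nat \<Rightarrow> nat \<Rightarrow> nat set \<Rightarrow> nat set" where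
  "A_res N L lam S F = (\<lambda>y. y mod N) ` (insert S (F \<inter> homed N L lam))"

definition gaplen :: "nat \<Rightarrow> nat set \<Rightarrow> nat \<Rightarrow> nat" where
  "gaplen N A x = (LEAST d. 0 < d \<and> (x + d) mod N \<in> A)"

definition largest_gaps :: "nat \<Rightarrow> nat set \<Rightarrow> nat set" where
  "largest_gaps N A = {x \<in> A. \<forall>y\<in>A. gaplen N A y \<le> gaplen N A x}"

definition route_pmf :: "nat \<Rightarrow> nat \<Rightarrow> nat \<Rightarrow> (nat \<times> nat set) pmf \<Rightarrow> (nat \<times> nat set \<times> nat) pmf" where
  "route_pmf N L lam P = bind_pmf P (\<lambda>(S, F).
      map_pmf (\<lambda>G. (S, F, G)) (pmf_of_set (largest_gaps N (A_res N L lam S F))))"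

text \<open>Segment u_n (from node n-1 to n, indices mod N) lies on the clockwise arc from S to G.\<close>
definition cw :: "nat \<Rightarrow> nat \<Rightarrow> nat \<Rightarrow> int \<Rightarrow> bool" where
  "cw N S G n \<longleftrightarrow> (let d = (n - int S) mod int N in 0 < d \<and> d \<le> (int G - int S) mod int N)"

definition ceil_node :: "nat \<Rightarrow> nat \<Rightarrow> int \<Rightarrow> int" where
  "ceil_node L lam n = \<lceil>(real_of_int n - real lam) / real L\<rceil> * int L + int lam"

end

theory Submission imports Defs begin
lemma dvd_gap_False:
  fixes L x :: int assumes "L dvd x" "-L < x" "x < 0" shows False
proof -
  have "L dvd -x" using assms(1) by simp
  then have "L \<le> -x" using assms by (intro zdvd_imp_le) auto
  then show False using assms by simp
qed

lemma core:
  fixes N L D g r :: int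
  assumes LN: "L dvd N" and L0: "0 < L" and N0: "0 < N"
    and D: "0 \<le> D" "D < N" and g: "0 \<le> g" "g < N" and r: "0 \<le> r" "r < L"
    and hom: "g \<noteq> 0 \<Longrightarrow> L dvd (g - D - r)"
  shows "((0 < D \<and> D \<le> g) \<longleftrightarrow>
           ((0 < (D + r) mod N \<and> (D + r) mod N \<le> g) \<and> \<not> (0 < r \<and> (D = 0 \<or> N < D + r) \<and> g \<noteq> 0)))
     \<and> ((0 < r \<and> (D = 0 \<or> N < D + r) \<and> g \<noteq> 0) \<longrightarrow> (0 < (D + r) mod N \<and> (D + r) mod N \<le> g))"
proof -
  have LleN: "L \<le> N" using LN N0 by (simp add: zdvd_imp_le)
  show ?thesis
  proof (cases "r = 0")
    case True then show ?thesis using D by simp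
  next
    case rpos: False
    show ?thesis
    proof (cases "D = 0")
      case True
      have m: "(D + r) mod N = r" using True r LleN by simp
      have "g \<noteq> 0 \<Longrightarrow> r \<le> g"
      proof (rule ccontr)
        assume "g \<noteq> 0" "\<not> r \<le> g"
        then show False using dvd_gap_False[of L "g - D - r"] hom True r g by simp
      qed
      then show ?thesis using True m rpos r by auto
    next
      case Dpos: False
      show ?thesis
      proof (cases "N < D + r")
        case True
        have m: "(D + r) mod N = D + r - N"
        proof -
          have "(D + r) mod N = ((D + r - N) + N) mod N" by simp
          also have "\<dots> = (D + r - N) mod N" by (rule mod_add_self2)
          also have "\<dots> = D + r - N" using True D r LleN by (intro mod_pos_pos_trivial) auto
          finally show ?thesis .
        qed
        have h1: "g \<noteq> 0 \<Longrightarrow> D + r - N \<le> g"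
        proof (rule ccontr)
          assume a: "g \<noteq> 0" "\<not> D + r - N \<le> g"
          have "L dvd (g - (D + r - N))" 
          proof -
            have "g - (D + r - N) = (g - D - r) + N" by simp
            then show ?thesis using hom[OF a(1)] LN by (simp only:) (rule dvd_add)
          qed
          then show False using dvd_gap_False[of L "g - (D + r - N)"] a g r D True by simp
        qed
        have h2: "g \<noteq> 0 \<Longrightarrow> g < D"
        proof (rule ccontr)
          assume a: "g \<noteq> 0" "\<not> g < D"
          have "L dvd (g - (D + r - N)) " 
          proof -
            have "g - (D + r - N) = (g - D - r) + N" by simp
            then show ?thesis using hom[OF a(1)] LN by (simp only:) (rule dvd_add)
          qed
          then have "L dvd (g - (D + r - N) - N)" using LN by (rule dvd_diff)
          then show False using dvd_gap_False[of L "g - (D + r - N) - N"] a g r D True by simp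
        qed
        show ?thesis using h1 h2 m True Dpos D r g rpos by auto
      next
        case False
        show ?thesis
        proof (cases "D + r = N")
          case True
          have "g \<noteq> 0 \<Longrightarrow> g < D"
          proof (rule ccontr)
            assume a: "g \<noteq> 0" "\<not> g < D"
            have "L dvd (g - D - r)" using hom[OF a(1)] .
            then show False using dvd_gap_False[of L "g - D - r"] a g r D True by simp
          qed
          then show ?thesis using True Dpos D by auto
        next
          case False2: False
          have m: "(D + r) mod N = D + r" using False False2 D r by simp
          have "D \<le> g \<Longrightarrow> D + r \<le> g"
          proof (rule ccontr)
            assume a: "D \<le> g" "\<not> D + r \<le> g"
            have "g \<noteq> 0" using a Dpos D by simp
            then have "L dvd (g - D - r)" by (rule hom)
            then show False using dvd_gap_False[of L "g - D - r"] a r by simp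
          qed
          then show ?thesis using m Dpos D r False by auto
        qed
      qed
    qed
  qed
qed

lemma ceil_eq:
  fixes L lam :: nat and n :: int assumes "0 < L"
  shows "ceil_node L lam n = n + (int lam - n) mod int L"
proof -
  define z where "z = - ((int lam - n) div int L)"
  define r where "r = (int lam - n) mod int L"
  have zr: "z * int L = n - int lam + r"
  proof -
    have "z * int L = - ((int lam - n) div int L * int L)" unfolding z_def by simp
    then show ?thesis using div_mult_mod_eq[of "int lam - n" "int L"] unfolding r_def by linarith
  qed
  have r0: "0 \<le> r" "r < int L" using assms unfolding r_def by auto
  have x: "(real_of_int n - real lam) / real L = real_of_int z - real_of_int r / real L"
  proof -
    have "real_of_int z * real L = real_of_int n - real lam + real_of_int r"
      using arg_cong[OF zr, of real_of_int] by simp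
    then show ?thesis using assms by (simp add: field_simps)
  qed
  have "\<lceil>(real_of_int n - real lam) / real L\<rceil> = z"
  proof (rule ceiling_unique)
    have "real_of_int r / real L < 1" using r0 assms by simp
    then show "real_of_int z - 1 < (real_of_int n - real lam) / real L" unfolding x by simp
    have "0 \<le> real_of_int r / real L" using r0 by simp
    then show "(real_of_int n - real lam) / real L \<le> real_of_int z" unfolding x by simp
  qed
  then show ?thesis unfolding ceil_node_def using zr r_def by simp
qed

lemma range_eq:
  fixes n S N r :: int assumes N0: "0 < N" and r: "0 \<le> r" "r < N"
  shows "(S mod N \<in> (\<lambda>k. k mod N) ` {n..n + r - 1}) \<longleftrightarrow>
         (0 < r \<and> ((n - S) mod N = 0 \<or> N < (n - S) mod N + r))"
proof
  assume "S mod N \<in> (\<lambda>k. k mod N) ` {n..n + r - 1}"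
  then obtain k where k: "k \<in> {n..n + r - 1}" "k mod N = S mod N" by auto
  define D where "D = (n - S) mod N"
  have "(D + (k - n)) mod N = (n - S + (k - n)) mod N" unfolding D_def by (rule mod_add_left_eq)
  also have "\<dots> = (k - S) mod N" by simp
  also have "\<dots> = 0" using k(2) by (simp only: mod_eq_dvd_iff dvd_eq_mod_eq_0[symmetric])
  finally have dv: "N dvd (D + (k - n))" by auto
  have "D = 0 \<or> N < D + r"
  proof (cases "D = 0")
    case False
    then have "0 < D" using N0 unfolding D_def by (simp add: order_le_neq_trans)
    then have "N \<le> D + (k - n)" using dv k by (intro zdvd_imp_le) auto
    then show ?thesis using k by auto
  qed simp
  then show "0 < r \<and> ((n - S) mod N = 0 \<or> N < (n - S) mod N + r)" using k unfolding D_def by auto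
next
  assume a: "0 < r \<and> ((n - S) mod N = 0 \<or> N < (n - S) mod N + r)"
  define D where "D = (n - S) mod N"
  have D: "0 \<le> D" "D < N" using N0 unfolding D_def by auto
  have dv: "N dvd ((n - S) - D)" unfolding D_def by simp
  show "S mod N \<in> (\<lambda>k. k mod N) ` {n..n + r - 1}"
  proof (cases "D = 0")
    case True
    then have "n mod N = S mod N" using dv by (simp add: mod_eq_dvd_iff)
    then show ?thesis using a by (intro image_eqI[of _ _ n]) auto
  next
    case False
    then have lt: "N < D + r" using a unfolding D_def by auto
    have "N dvd ((n - S) - D + N)" using dv by simp
    moreover have "(n - S) - D + N = (n + N - D) - S" by simp
    ultimately have "(n + N - D) mod N = S mod N" by (simp add: mod_eq_dvd_iff)
    then show ?thesis using lt D by (intro image_eqI[of _ _ "n + N - D"]) auto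
  qed
qed

lemma dvd_mod_minus: fixes a b :: int shows "b dvd (a mod b - a)"
proof -
  have "b dvd (a - a mod b)" by (rule dvd_minus_mod)
  then have "b dvd - (a - a mod b)" by (simp only: dvd_minus_iff)
  then show ?thesis by simp
qed

lemma lin2: fixes a b c x s m l ym y kl :: int
  assumes "x = ym" "y = l + kl"
  shows "a - b - c = (a - (x - s)) - (b - (m - s)) - (c - (l - m)) + (ym - y) + kl"
  using assms by simp

lemma hom_dvd:
  fixes N L lam S n G :: nat and F
  assumes LN: "L dvd N" and N0: "0 < N"
    and G: "G \<in> A_res N L lam S F" and ne: "int G \<noteq> int S mod int N"
  shows "int L dvd ((int G - int S) mod int N - (int n - int S) mod int N - (int lam - int n) mod int L)"
proof -
  obtain y where y: "G = y mod N" "y = S \<or> y \<in> homed N L lam" using G unfolding A_res_def by auto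
  have "y \<noteq> S" using y ne by (auto simp: zmod_int)
  then obtain k where k: "y = lam + k * L" using y unfolding homed_def by auto
  define Y where "Y = int lam + int k * int L"
  have GY: "int G = Y mod int N" using y k unfolding Y_def by (simp add: zmod_int)
  have LN': "int L dvd int N" using LN by simp
  have e: "(int G - int S) mod int N - (int n - int S) mod int N - (int lam - int n) mod int L
     = ((int G - int S) mod int N - (int G - int S)) - ((int n - int S) mod int N - (int n - int S))
       - ((int lam - int n) mod int L - (int lam - int n)) + (Y mod int N - Y) + int k * int L"
    by (rule lin2[OF GY Y_def])
  have d1: "int L dvd ((int G - int S) mod int N - (int G - int S))"
    by (rule dvd_trans[OF LN']) (rule dvd_mod_minus)
  have d2: "int L dvd ((int n - int S) mod int N - (int n - int S))"
    by (rule dvd_trans[OF LN']) (rule dvd_mod_minus)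
  have d3: "int L dvd ((int lam - int n) mod int L - (int lam - int n))"
    by (rule dvd_mod_minus)
  have d4: "int L dvd (Y mod int N - Y)"
    by (rule dvd_trans[OF LN']) (rule dvd_mod_minus)
  show ?thesis unfolding e
    by (rule dvd_add[OF dvd_add[OF dvd_diff[OF dvd_diff[OF d1 d2] d3] d4]]) simp
qed

lemma lg:
  assumes "finite A" "A \<noteq> {}"
  shows "largest_gaps N A \<noteq> {}" "finite (largest_gaps N A)" "largest_gaps N A \<subseteq> A"
proof -
  show "largest_gaps N A \<subseteq> A" unfolding largest_gaps_def by auto
  then show "finite (largest_gaps N A)" using assms(1) by (rule finite_subset)
  define m where "m = Max (gaplen N A ` A)"
  have "m \<in> gaplen N A ` A" unfolding m_def using assms by (intro Max_in) auto
  then obtain x where x: "x \<in> A" "gaplen N A x = m" by auto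
  have "\<forall>y\<in>A. gaplen N A y \<le> gaplen N A x" using x assms unfolding m_def by auto
  then show "largest_gaps N A \<noteq> {}" using x unfolding largest_gaps_def by auto
qed

lemma A_fin: "finite (A_res N L lam S F)" "A_res N L lam S F \<noteq> {}"
proof -
  have "homed N L lam = (\<lambda>k. lam + k * L) ` {..<N div L}" unfolding homed_def by auto
  then have "finite (homed N L lam)" by simp
  then show "finite (A_res N L lam S F)" unfolding A_res_def by simp
  show "A_res N L lam S F \<noteq> {}" unfolding A_res_def by simp
qed

lemma set_route:
  assumes "x \<in> set_pmf (route_pmf N L lam P)"
  shows "\<exists>S F G. x = (S, F, G) \<and> G \<in> A_res N L lam S F"
proof -
  from assms obtain p where p: "x \<in> set_pmf ((\<lambda>(S, F).
      map_pmf (\<lambda>G. (S, F, G)) (pmf_of_set (largest_gaps N (A_res N L lam S F)))) p)"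
    unfolding route_pmf_def set_bind_pmf by blast
  obtain S F where pSF: "p = (S, F)" by (cases p)
  have f1: "finite (largest_gaps N (A_res N L lam S F))" by (rule lg(2)[OF A_fin])
  have f2: "largest_gaps N (A_res N L lam S F) \<noteq> {}" by (rule lg(1)[OF A_fin])
  have f3: "largest_gaps N (A_res N L lam S F) \<subseteq> A_res N L lam S F" by (rule lg(3)[OF A_fin])
  have "x \<in> (\<lambda>G. (S, F, G)) ` set_pmf (pmf_of_set (largest_gaps N (A_res N L lam S F)))"
    using p unfolding pSF by (simp only: prod.case set_map_pmf)
  then have "x \<in> (\<lambda>G. (S, F, G)) ` largest_gaps N (A_res N L lam S F)"
    by (simp only: set_pmf_of_set[OF f2 f1])
  then show ?thesis using f3 by blast
qed

lemma g_zero: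
  fixes G S N :: nat assumes "0 < N" "G < N"
  shows "((int G - int S) mod int N = 0) \<longleftrightarrow> int G = int S mod int N"
proof -
  have "((int G - int S) mod int N = 0) \<longleftrightarrow> int G mod int N = int S mod int N"
    by (simp only: dvd_eq_mod_eq_0[symmetric] mod_eq_dvd_iff)
  also have "int G mod int N = int G" using assms by simp
  finally show ?thesis .
qed

lemma pointwise:
  fixes N L lam n S G :: nat and F
  assumes L0: "0 < L" and N0: "0 < N" and LN: "L dvd N"
    and GA: "G \<in> A_res N L lam S F"
  defines "c \<equiv> ceil_node L lam (int n)"
  shows "(cw N S G (int n) \<longleftrightarrow> cw N S G c \<and>
            \<not> (int S mod int N \<in> (\<lambda>k. k mod int N) ` {int n..c - 1} \<and> G \<noteq> S mod N))
       \<and> ((int S mod int N \<in> (\<lambda>k. k mod int N) ` {int n..c - 1} \<and> G \<noteq> S mod N) \<longrightarrow> cw N S G c)"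
proof -
  define r where "r = (int lam - int n) mod int L"
  define D where "D = (int n - int S) mod int N"
  define g where "g = (int G - int S) mod int N"
  have cr: "c = int n + r" unfolding c_def r_def using L0 by (rule ceil_eq)
  have LleN: "L \<le> N" using LN N0 by (simp add: dvd_imp_le)
  have r: "0 \<le> r" "r < int L" using L0 unfolding r_def by auto
  have D: "0 \<le> D" "D < int N" using N0 unfolding D_def by auto
  have g: "0 \<le> g" "g < int N" using N0 unfolding g_def by auto
  have GN: "G < N" using GA N0 unfolding A_res_def by auto
  have gz: "(g = 0) \<longleftrightarrow> int G = int S mod int N" unfolding g_def using N0 GN by (rule g_zero)
  have hom: "int L dvd (g - D - r)" if gn: "g \<noteq> 0"
  proof -
    have "int G \<noteq> int S mod int N" using gz gn by simp
    then show ?thesis unfolding g_def D_def r_def by (rule hom_dvd[OF LN N0 GA])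
  qed
  have LN': "int L dvd int N" using LN by simp
  note co = core[OF LN' _ _ D g r hom] 
  have cwn: "cw N S G (int n) \<longleftrightarrow> 0 < D \<and> D \<le> g" unfolding cw_def D_def g_def Let_def by simp
  have cc1: "(D + r) mod int N = (int n - int S + r) mod int N"
    unfolding D_def by (rule mod_add_left_eq)
  have cc: "(c - int S) mod int N = (D + r) mod int N"
    unfolding cc1 cr by (simp add: algebra_simps)
  have cwc: "cw N S G c \<longleftrightarrow> 0 < (D + r) mod int N \<and> (D + r) mod int N \<le> g"
    unfolding cw_def cc g_def[symmetric] Let_def by simp
  have rng: "(int S mod int N \<in> (\<lambda>k. k mod int N) ` {int n..c - 1}) \<longleftrightarrow> (0 < r \<and> (D = 0 \<or> int N < D + r))"
  proof -
    have rN: "r < int N" using r LleN by simp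
    have N0': "0 < int N" using N0 by simp
    show ?thesis unfolding cr D_def by (rule range_eq[OF N0' r(1) rN])
  qed
  have SN: "int S mod int N = int (S mod N)" by (simp add: zmod_int)
  have GS: "G \<noteq> S mod N \<longleftrightarrow> g \<noteq> 0" unfolding gz SN by simp
  have L0': "0 < int L" and N0': "0 < int N" using L0 N0 by auto
  note co' = co[OF L0' N0']
  show ?thesis using co' unfolding cwn cwc rng GS conj_assoc by assumption
qed

theorem corollary3p2:
  fixes N L lam n :: nat and \<alpha> \<beta> \<gamma> :: real and \<mu> \<nu> \<kappa> :: "nat pmf"
  assumes "0 < L" and "0 < N" and "L dvd N" and "lam \<in> {1..L}"
    and "\<alpha> \<ge> 0" and "\<beta> \<ge> 0" and "\<gamma> \<ge> 0" and "\<alpha> + \<beta> + \<gamma> = 1"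
    and "set_pmf \<mu> \<subseteq> {1..N-1}" and "set_pmf \<nu> \<subseteq> {1..N-1}" and "set_pmf \<kappa> \<subseteq> {1..N-1}"
    and "n < N"
  defines "P \<equiv> route_pmf N L lam (packet_pmf N \<alpha> \<beta> \<gamma> \<mu> \<nu> \<kappa>)"
    and "c \<equiv> ceil_node L lam (int n)"
  shows "measure_pmf.prob P {(S, F, G). cw N S G (int n)}
           = measure_pmf.prob P {(S, F, G). cw N S G c}
             - measure_pmf.prob P {(S, F, G). int S mod int N \<in> (\<lambda>k. k mod int N) ` {int n..c - 1}
                                              \<and> G \<noteq> S mod N}
         \<and> measure_pmf.prob P {(S, F, G). cw N S G (int n)} \<le> measure_pmf.prob P {(S, F, G). cw N S G c}"
proof -
  define X where "X = {(S::nat, F::nat set, G::nat). cw N S G (int n)}"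
  define Y where "Y = {(S::nat, F::nat set, G::nat). cw N S G c}"
  define B where "B = {(S::nat, F::nat set, G::nat). int S mod int N \<in> (\<lambda>k. k mod int N) ` {int n..c - 1}
                                              \<and> G \<noteq> S mod N}"
  have pt: "(x \<in> X \<longleftrightarrow> x \<in> Y \<and> x \<notin> B) \<and> (x \<in> B \<longrightarrow> x \<in> Y)" if xP: "x \<in> set_pmf P" for x
  proof -
    obtain S F G where x: "x = (S, F, G)" "G \<in> A_res N L lam S F"
      using set_route[OF xP[unfolded P_def]] by blast
    show ?thesis using pointwise[OF assms(1,2,3) x(2), of n] unfolding x X_def Y_def B_def c_def mem_Collect_eq prod.case by blast
  qed
  have e1: "X \<inter> set_pmf P = (Y - B) \<inter> set_pmf P" using pt by blast
  have e2: "(Y \<inter> B) \<inter> set_pmf P = B \<inter> set_pmf P" using pt by blast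
  have "measure_pmf.prob P X = measure_pmf.prob P (Y - B)"
    by (metis e1 measure_Int_set_pmf)
  also have "\<dots> = measure_pmf.prob P Y - measure_pmf.prob P (Y \<inter> B)"
    by (rule measure_pmf.finite_measure_Diff') auto
  also have "measure_pmf.prob P (Y \<inter> B) = measure_pmf.prob P B"
    by (metis e2 measure_Int_set_pmf)
  finally have eq: "measure_pmf.prob P X = measure_pmf.prob P Y - measure_pmf.prob P B" .
  moreover have "measure_pmf.prob P B \<ge> 0" by simp
  ultimately show ?thesis unfolding X_def Y_def B_def by linarith
qed

end
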